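(* Let $n\ge 2$, let $0\le c_1<c_2<\cdots<c_n$ be real numbers, and define $f_C:SO(n)\to\mathbb{R}$ by $f_C(A)=\sum_{i=1}^n c_i a_{ii}$. Let $A=\operatorname{diag}(\epsilon_1,\dots,\epsilon_n)\in SO(n)$ with $\epsilon_i\in\{+1,-1\}$ be a critical point of $f_C$, and let $i_1<i_2<\cdots<i_m$ be the indices $i$ with $\epsilon_i=+1$. Then the Morse index of $A$ (the number of negative eigenvalues of the Hessian of $f_C$ at $A$) equals $(i_1-1)+(i_2-1)+\cdots+(i_m-1)$ (this is $0$ when $m=0$), and the critical value is $f_C(A)=2(c_{i_1}+\cdots+c_{i_m})-\sum_{i=1}^n c_i$.
   Context: $SO(n)=\{A\in M_n(\mathbb{R}) : AA^t=I_n,\ \det A=1\}$. The critical points of $f_C$ are exactly the diagonal matrices in $SO(n)$ with diagonal entries $\pm1$, and they are non-degenerate; the index of a non-degenerate critical point is the number of negative eigenvalues of the Hessian in any local chart (independent of the chart by Sylvester's law of inertia). *)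

theory Defs
  imports Complex_Main "Jordan_Normal_Form.Char_Poly"
begin

(* Matrices are Jordan_Normal_Form matrices, indices 0-based: entry (i,j) with i,j < n. *)

definition SO :: "nat \<Rightarrow> real mat set" where
  "SO n = {A \<in> carrier_mat n n. A * transpose_mat A = 1\<^sub>m n \<and> det A = 1}"

definition fC :: "nat \<Rightarrow> (nat \<Rightarrow> real) \<Rightarrow> real mat \<Rightarrow> real" where
  "fC n c A = (\<Sum>i<n. c i * A $$ (i,i))"

definition mexp :: "nat \<Rightarrow> real mat \<Rightarrow> real mat" where
  "mexp n X = mat n n (\<lambda>(i,j). \<Sum>k. (X ^\<^sub>m k) $$ (i,j) / fact k)"

(* enumeration of the coordinate pairs (i,j), i<j<n, of the Lie algebra so(n) *)
definition coord_pairs :: "nat \<Rightarrow> (nat \<times> nat) list" where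
  "coord_pairs n = concat (map (\<lambda>j. map (\<lambda>i. (i,j)) [0..<j]) [0..<n])"

definition dimSO :: "nat \<Rightarrow> nat" where
  "dimSO n = length (coord_pairs n)"

definition skew_of :: "nat \<Rightarrow> (nat \<Rightarrow> real) \<Rightarrow> real mat" where
  "skew_of n x = mat n n (\<lambda>(a,b). \<Sum>k<dimSO n.
      x k * (if (a,b) = coord_pairs n ! k then 1
             else if (b,a) = coord_pairs n ! k then -1 else 0))"

definition chart :: "nat \<Rightarrow> real mat \<Rightarrow> (nat \<Rightarrow> real) \<Rightarrow> real mat" where
  "chart n A x = A * mexp n (skew_of n x)"

definition partial :: "nat \<Rightarrow> ((nat \<Rightarrow> real) \<Rightarrow> real) \<Rightarrow> (nat \<Rightarrow> real) \<Rightarrow> real" where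
  "partial k h x = (SOME D. ((\<lambda>t. h (x(k := x k + t))) has_real_derivative D) (at 0))"

definition hessian :: "nat \<Rightarrow> ((nat \<Rightarrow> real) \<Rightarrow> real) \<Rightarrow> (nat \<Rightarrow> real) \<Rightarrow> real mat" where
  "hessian N h x = mat N N (\<lambda>(p,q). partial p (partial q h) x)"

definition num_neg_eigenvalues :: "real mat \<Rightarrow> nat" where
  "num_neg_eigenvalues M =
     (\<Sum>a\<in>{a. a < 0 \<and> poly (char_poly M) a = 0}. order a (char_poly M))"

definition morse_index :: "nat \<Rightarrow> (nat \<Rightarrow> real) \<Rightarrow> real mat \<Rightarrow> nat" where
  "morse_index n c A =
     num_neg_eigenvalues (hessian (dimSO n) (\<lambda>x. fC n c (chart n A x)) (\<lambda>_. 0))"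

end

theory Submission
  imports Defs
begin

definition emat :: "nat \<Rightarrow> nat \<Rightarrow> nat \<Rightarrow> real mat" where
  "emat n a b = mat n n (\<lambda>(i,j). if (i,j)=(a,b) then 1 else if (j,i)=(a,b) then -1 else 0)"

lemma emat_dim[simp]: "dim_row (emat n a b) = n" "dim_col (emat n a b) = n" "emat n a b \<in> carrier_mat n n"
  by (auto simp: emat_def)

lemma set_coord_pairs: "set (coord_pairs n) = {(i,j). i < j \<and> j < n}"
  unfolding coord_pairs_def by auto

lemma distinct_coord_pairs: "distinct (coord_pairs n)"
proof (induction n)
  case 0 then show ?case by (simp add: coord_pairs_def)
next
  case (Suc n)
  have e: "coord_pairs (Suc n) = coord_pairs n @ map (\<lambda>i. (i,n)) [0..<n]"
    by (simp add: coord_pairs_def)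
  show ?case unfolding e using Suc by (auto simp: distinct_map inj_on_def set_coord_pairs)
qed

lemma skew_entry: "i < n \<Longrightarrow> j < n \<Longrightarrow> skew_of n x $$ (i,j) = (\<Sum>k<dimSO n.
      x k * (if (i,j) = coord_pairs n ! k then 1
             else if (j,i) = coord_pairs n ! k then -1 else 0))"
  unfolding skew_of_def by simp

lemma skew_one:
  assumes "p < dimSO n" "coord_pairs n ! p = (a,b)"
  shows "skew_of n ((\<lambda>_. 0)(p := t)) = t \<cdot>\<^sub>m emat n a b"
proof (rule eq_matI)
  fix i j assume ij: "i < dim_row (t \<cdot>\<^sub>m emat n a b)" "j < dim_col (t \<cdot>\<^sub>m emat n a b)"
  hence ij': "i < n" "j < n" by auto
  define e where "e k = (if (i,j) = coord_pairs n ! k then 1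
             else if (j,i) = coord_pairs n ! k then -1 else (0::real))" for k
  have "skew_of n ((\<lambda>_. 0)(p := t)) $$ (i,j) = (\<Sum>k<dimSO n. ((\<lambda>_. 0)(p := t)) k * e k)"
    using ij' by (simp add: skew_entry e_def)
  also have "\<dots> = (\<Sum>k<dimSO n. (if k = p then t * e k else 0))"
    by (rule sum.cong) auto
  also have "\<dots> = t * e p"
    using assms by simp
  also have "e p = emat n a b $$ (i,j)" using assms ij' by (simp add: e_def emat_def)
  also have "t * emat n a b $$ (i,j) = (t \<cdot>\<^sub>m emat n a b) $$ (i,j)" using ij' by simp
  finally show "skew_of n ((\<lambda>_. 0)(p := t)) $$ (i,j) = (t \<cdot>\<^sub>m emat n a b) $$ (i,j)" .
qed (simp_all add: skew_of_def)

lemma skew_two: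
  assumes "p < dimSO n" "coord_pairs n ! p = (a,b)" "q < dimSO n" "coord_pairs n ! q = (c,d)" "p \<noteq> q"
  shows "skew_of n ((\<lambda>_. 0)(p := s, q := u)) = s \<cdot>\<^sub>m emat n a b + u \<cdot>\<^sub>m emat n c d"
proof (rule eq_matI)
  fix i j assume ij: "i < dim_row (s \<cdot>\<^sub>m emat n a b + u \<cdot>\<^sub>m emat n c d)" "j < dim_col (s \<cdot>\<^sub>m emat n a b + u \<cdot>\<^sub>m emat n c d)"
  hence ij': "i < n" "j < n" by auto
  define e where "e k = (if (i,j) = coord_pairs n ! k then 1
             else if (j,i) = coord_pairs n ! k then -1 else (0::real))" for k
  have "skew_of n ((\<lambda>_. 0)(p := s, q := u)) $$ (i,j) = (\<Sum>k<dimSO n. ((\<lambda>_. 0)(p := s, q := u)) k * e k)"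
    using ij' by (simp add: skew_entry e_def)
  also have "\<dots> = (\<Sum>k<dimSO n. (if k = p then s * e k else 0) + (if k = q then u * e k else 0))"
    using assms(5) by (intro sum.cong) auto
  also have "\<dots> = s * e p + u * e q"
    using assms by (simp add: sum.distrib)
  also have "e p = emat n a b $$ (i,j)" using assms ij' by (simp add: e_def emat_def)
  also have "e q = emat n c d $$ (i,j)" using assms ij' by (simp add: e_def emat_def)
  also have "s * emat n a b $$ (i,j) + u * emat n c d $$ (i,j) = (s \<cdot>\<^sub>m emat n a b + u \<cdot>\<^sub>m emat n c d) $$ (i,j)" using ij' by simp
  finally show "skew_of n ((\<lambda>_. 0)(p := s, q := u)) $$ (i,j) = (s \<cdot>\<^sub>m emat n a b + u \<cdot>\<^sub>m emat n c d) $$ (i,j)" .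
qed (simp_all add: skew_of_def)


lemma mult_entry:
  assumes "A \<in> carrier_mat n n" "B \<in> carrier_mat n n" "i < n" "j < n"
  shows "(A * B) $$ (i,j) = (\<Sum>l<n. A $$ (i,l) * B $$ (l,j))"
  using assms by (simp add: scalar_prod_def lessThan_atLeast0)

fun Dm :: "real mat \<Rightarrow> real mat \<Rightarrow> real \<Rightarrow> nat \<Rightarrow> real mat" where
  "Dm M N u 0 = 0\<^sub>m (dim_row M) (dim_row M)"
| "Dm M N u (Suc k) = Dm M N u k * (M + u \<cdot>\<^sub>m N) + (M + u \<cdot>\<^sub>m N) ^\<^sub>m k * N"

lemma Dm_carrier:
  assumes "M \<in> carrier_mat n n" "N \<in> carrier_mat n n"
  shows "Dm M N u k \<in> carrier_mat n n"
  using assms by (induction k) auto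

lemma pow_deriv:
  assumes M: "M \<in> carrier_mat n n" and N: "N \<in> carrier_mat n n"
  shows "i < n \<Longrightarrow> j < n \<Longrightarrow>
    ((\<lambda>u. ((M + u \<cdot>\<^sub>m N) ^\<^sub>m k) $$ (i,j)) has_real_derivative (Dm M N u k) $$ (i,j)) (at u)"
proof (induction k arbitrary: i j)
  case 0
  have "((M + u \<cdot>\<^sub>m N) ^\<^sub>m 0) $$ (i,j) = (if i = j then 1 else 0)" for u
    using 0 M N by simp
  then show ?case using 0 M by simp
next
  case (Suc k)
  have XC: "M + u \<cdot>\<^sub>m N \<in> carrier_mat n n" for u using M N by simp
  have e: "((M + u \<cdot>\<^sub>m N) ^\<^sub>m Suc k) $$ (i,j) =
     (\<Sum>l<n. ((M + u \<cdot>\<^sub>m N) ^\<^sub>m k) $$ (i,l) * (M $$ (l,j) + u * N $$ (l,j)))" for u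
  proof -
    have "((M + u \<cdot>\<^sub>m N) ^\<^sub>m Suc k) $$ (i,j) = (\<Sum>l<n. ((M + u \<cdot>\<^sub>m N) ^\<^sub>m k) $$ (i,l) * (M + u \<cdot>\<^sub>m N) $$ (l,j))"
      by (simp only: pow_mat.simps(2)) (rule mult_entry[OF pow_carrier_mat[OF XC] XC Suc.prems])
    also have "\<dots> = (\<Sum>l<n. ((M + u \<cdot>\<^sub>m N) ^\<^sub>m k) $$ (i,l) * (M $$ (l,j) + u * N $$ (l,j)))"
      using Suc.prems M N by (intro sum.cong) auto
    finally show ?thesis .
  qed
  have d: "((\<lambda>u. ((M + u \<cdot>\<^sub>m N) ^\<^sub>m Suc k) $$ (i,j)) has_real_derivative
     (\<Sum>l<n. (Dm M N u k) $$ (i,l) * (M $$ (l,j) + u * N $$ (l,j)) + ((M + u \<cdot>\<^sub>m N) ^\<^sub>m k) $$ (i,l) * N $$ (l,j))) (at u)"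
    unfolding e
  proof (rule DERIV_sum)
    fix l assume "l \<in> {..<n}"
    hence l: "l < n" by simp
    note IH = Suc.IH[OF Suc.prems(1) l]
    have g: "((\<lambda>u. M $$ (l,j) + u * N $$ (l,j)) has_real_derivative N $$ (l,j)) (at u)"
      by (auto intro!: derivative_eq_intros)
    show "((\<lambda>u. ((M + u \<cdot>\<^sub>m N) ^\<^sub>m k) $$ (i,l) * (M $$ (l,j) + u * N $$ (l,j))) has_real_derivative
       (Dm M N u k) $$ (i,l) * (M $$ (l,j) + u * N $$ (l,j)) + ((M + u \<cdot>\<^sub>m N) ^\<^sub>m k) $$ (i,l) * N $$ (l,j)) (at u)"
      using DERIV_mult'[OF IH g] by (simp add: add.commute)
  qed
  have "(Dm M N u (Suc k)) $$ (i,j) = (\<Sum>l<n. (Dm M N u k) $$ (i,l) * (M $$ (l,j) + u * N $$ (l,j)) + ((M + u \<cdot>\<^sub>m N) ^\<^sub>m k) $$ (i,l) * N $$ (l,j))"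
  proof -
    have "(Dm M N u (Suc k)) $$ (i,j) = (Dm M N u k * (M + u \<cdot>\<^sub>m N)) $$ (i,j) + ((M + u \<cdot>\<^sub>m N) ^\<^sub>m k * N) $$ (i,j)"
    proof -
      have c1: "Dm M N u k * (M + u \<cdot>\<^sub>m N) \<in> carrier_mat n n" using Dm_carrier[OF M N] XC by (rule mult_carrier_mat)
      have c2: "(M + u \<cdot>\<^sub>m N) ^\<^sub>m k * N \<in> carrier_mat n n" using pow_carrier_mat[OF XC] N by (rule mult_carrier_mat)
      show ?thesis unfolding Dm.simps using Suc.prems carrier_matD[OF c1] carrier_matD[OF c2]
        by (intro index_add_mat(1)) auto
    qed
    also have "\<dots> = (\<Sum>l<n. (Dm M N u k) $$ (i,l) * (M + u \<cdot>\<^sub>m N) $$ (l,j)) + (\<Sum>l<n. ((M + u \<cdot>\<^sub>m N) ^\<^sub>m k) $$ (i,l) * N $$ (l,j))"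
      by (simp only: mult_entry[OF Dm_carrier[OF M N] XC Suc.prems] mult_entry[OF pow_carrier_mat[OF XC] N Suc.prems])
    also have "\<dots> = (\<Sum>l<n. (Dm M N u k) $$ (i,l) * (M $$ (l,j) + u * N $$ (l,j)) + ((M + u \<cdot>\<^sub>m N) ^\<^sub>m k) $$ (i,l) * N $$ (l,j))"
      unfolding sum.distrib[symmetric] using Suc.prems M N by (intro sum.cong) auto
    finally show ?thesis .
  qed
  with d show ?case by simp
qed


lemma sum_prod_bound:
  assumes "\<And>l. l < n \<Longrightarrow> \<bar>f l\<bar> \<le> A" "\<And>l. l < n \<Longrightarrow> \<bar>g l\<bar> \<le> B" "B \<ge> 0"
  shows "\<bar>\<Sum>l<n. f l * g l\<bar> \<le> real n * (A * B)"
proof -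
  have "\<bar>\<Sum>l<n. f l * g l\<bar> \<le> (\<Sum>l<n. \<bar>f l * g l\<bar>)" by (rule sum_abs)
  also have "\<dots> \<le> (\<Sum>l<n. A * B)"
  proof (rule sum_mono)
    fix l assume "l \<in> {..<n}"
    hence "\<bar>f l\<bar> \<le> A" "\<bar>g l\<bar> \<le> B" using assms by auto
    thus "\<bar>f l * g l\<bar> \<le> A * B" unfolding abs_mult
      by (meson abs_ge_zero assms(3) mult_mono' order.trans)
  qed
  finally show ?thesis by simp
qed

lemma pow_bound:
  assumes Y: "Y \<in> carrier_mat n n" and K: "K \<ge> 0" and b: "\<And>a b. a < n \<Longrightarrow> b < n \<Longrightarrow> \<bar>Y $$ (a,b)\<bar> \<le> K"
  shows "i < n \<Longrightarrow> j < n \<Longrightarrow> \<bar>(Y ^\<^sub>m k) $$ (i,j)\<bar> \<le> (real n * K) ^ k"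
proof (induction k arbitrary: i j)
  case 0 then show ?case using Y by simp
next
  case (Suc k)
  have "(Y ^\<^sub>m Suc k) $$ (i,j) = (\<Sum>l<n. (Y ^\<^sub>m k) $$ (i,l) * Y $$ (l,j))"
    by (simp only: pow_mat.simps(2)) (rule mult_entry[OF pow_carrier_mat[OF Y] Y Suc.prems])
  also have "\<bar>\<dots>\<bar> \<le> real n * ((real n * K) ^ k * K)"
    by (rule sum_prod_bound) (use Suc b K in auto)
  finally show ?case by (simp add: algebra_simps)
qed

lemma Dm_bound:
  assumes M: "M \<in> carrier_mat n n" and N: "N \<in> carrier_mat n n" and K: "K \<ge> 0" "real n * K \<ge> 1"
    and bX: "\<And>a b. a < n \<Longrightarrow> b < n \<Longrightarrow> \<bar>(M + u \<cdot>\<^sub>m N) $$ (a,b)\<bar> \<le> K"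
    and bN: "\<And>a b. a < n \<Longrightarrow> b < n \<Longrightarrow> \<bar>N $$ (a,b)\<bar> \<le> K"
  shows "i < n \<Longrightarrow> j < n \<Longrightarrow> \<bar>(Dm M N u k) $$ (i,j)\<bar> \<le> real k * (real n * K) ^ k * (real n * K)"
proof (induction k arbitrary: i j)
  case 0 then show ?case using M by simp
next
  case (Suc k)
  have XC: "M + u \<cdot>\<^sub>m N \<in> carrier_mat n n" using M N by simp
  have c1: "Dm M N u k * (M + u \<cdot>\<^sub>m N) \<in> carrier_mat n n" using Dm_carrier[OF M N] XC by (rule mult_carrier_mat)
  have c2: "(M + u \<cdot>\<^sub>m N) ^\<^sub>m k * N \<in> carrier_mat n n" using pow_carrier_mat[OF XC] N by (rule mult_carrier_mat)
  have "(Dm M N u (Suc k)) $$ (i,j) = (Dm M N u k * (M + u \<cdot>\<^sub>m N)) $$ (i,j) + ((M + u \<cdot>\<^sub>m N) ^\<^sub>m k * N) $$ (i,j)"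
    unfolding Dm.simps using Suc.prems carrier_matD[OF c1] carrier_matD[OF c2]
    by (intro index_add_mat(1)) auto
  also have "\<dots> = (\<Sum>l<n. (Dm M N u k) $$ (i,l) * (M + u \<cdot>\<^sub>m N) $$ (l,j)) + (\<Sum>l<n. ((M + u \<cdot>\<^sub>m N) ^\<^sub>m k) $$ (i,l) * N $$ (l,j))"
    by (simp only: mult_entry[OF Dm_carrier[OF M N] XC Suc.prems] mult_entry[OF pow_carrier_mat[OF XC] N Suc.prems])
  finally have e: "(Dm M N u (Suc k)) $$ (i,j) = \<dots>" .
  have b1: "\<bar>\<Sum>l<n. (Dm M N u k) $$ (i,l) * (M + u \<cdot>\<^sub>m N) $$ (l,j)\<bar> \<le> real n * ((real k * (real n * K) ^ k * (real n * K)) * K)"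
    by (rule sum_prod_bound) (use Suc bX K in auto)
  have b2: "\<bar>\<Sum>l<n. ((M + u \<cdot>\<^sub>m N) ^\<^sub>m k) $$ (i,l) * N $$ (l,j)\<bar> \<le> real n * ((real n * K) ^ k * K)"
    by (rule sum_prod_bound) (use Suc bN K pow_bound[OF XC K(1) bX] in auto)
  have p: "(real n * K) ^ k \<ge> 0" using K by simp
  have "real n * ((real n * K) ^ k * K) = (real n * K) ^ k * (real n * K)" by (simp add: algebra_simps)
  also have "\<dots> \<le> (real n * K) ^ k * (real n * K) * (real n * K)"
  proof -
    have q: "(real n * K) ^ k * (real n * K) \<ge> 0" using K by simp
    show ?thesis using mult_left_mono[OF K(2) q] by simp
  qed
  finally have b2': "real n * ((real n * K) ^ k * K) \<le> (real n * K) ^ Suc k * (real n * K)" by (simp add: ac_simps)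
  have b1': "real n * ((real k * (real n * K) ^ k * (real n * K)) * K) = real k * (real n * K) ^ Suc k * (real n * K)"
    by (simp add: algebra_simps)
  show ?case unfolding e using b1 b2 b2' b1' by (simp add: algebra_simps)
qed


lemma summable_expB: "summable (\<lambda>k. (B::real) ^ k / fact k)"
  using summable_exp[of B] by (simp add: divide_inverse mult.commute)

lemma k_pow_bound:
  assumes "B \<ge> 0" "C \<ge> 0"
  shows "real k * B ^ k * C \<le> (2 * B) ^ k * C"
proof -
  have "real k \<le> 2 ^ k" using less_exp[of k] by (metis of_nat_le_iff of_nat_numeral of_nat_power less_imp_le)
  hence "real k * B ^ k \<le> 2 ^ k * B ^ k" using assms by (simp add: mult_right_mono)
  thus ?thesis using assms by (simp add: mult_right_mono power_mult_distrib)
qed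

lemma mexp_line_deriv:
  assumes M: "M \<in> carrier_mat n n" and N: "N \<in> carrier_mat n n" and ij: "i < n" "j < n"
  shows "\<exists>D. ((\<lambda>u. mexp n (M + u \<cdot>\<^sub>m N) $$ (i,j)) has_real_derivative D) (at 0)"
proof -
  define K where "K = 1 + (\<Sum>a<n. \<Sum>b<n. \<bar>M $$ (a,b)\<bar> + \<bar>N $$ (a,b)\<bar>)"
  have ent: "\<bar>M $$ (a,b)\<bar> + \<bar>N $$ (a,b)\<bar> + 1 \<le> K" if "a < n" "b < n" for a b
  proof -
    have "\<bar>M $$ (a,b)\<bar> + \<bar>N $$ (a,b)\<bar> \<le> (\<Sum>b<n. \<bar>M $$ (a,b)\<bar> + \<bar>N $$ (a,b)\<bar>)"
      using that by (intro member_le_sum) auto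
    also have "\<dots> \<le> (\<Sum>a<n. \<Sum>b<n. \<bar>M $$ (a,b)\<bar> + \<bar>N $$ (a,b)\<bar>)"
      using that by (intro member_le_sum[where f = "\<lambda>a. \<Sum>b<n. \<bar>M $$ (a,b)\<bar> + \<bar>N $$ (a,b)\<bar>"]) (auto intro: sum_nonneg)
    finally show ?thesis unfolding K_def by simp
  qed
  have K0: "K \<ge> 1" using ent[OF ij] by simp
  have n1: "real n \<ge> 1" using ij by simp
  have nK: "real n * K \<ge> 1" using K0 n1 by (metis mult_mono' mult.right_neutral order.trans zero_le_one)
  define B where "B = real n * K"
  have B0: "B \<ge> 0" using nK B_def by simp
  have bN: "\<bar>N $$ (a,b)\<bar> \<le> K" if "a < n" "b < n" for a b using ent[OF that] by simp
  have bX: "\<bar>(M + u \<cdot>\<^sub>m N) $$ (a,b)\<bar> \<le> K" if "a < n" "b < n" "\<bar>u\<bar> \<le> 1" for a b u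
  proof -
    have "\<bar>(M + u \<cdot>\<^sub>m N) $$ (a,b)\<bar> = \<bar>M $$ (a,b) + u * N $$ (a,b)\<bar>" using that M N by simp
    also have "\<dots> \<le> \<bar>M $$ (a,b)\<bar> + \<bar>u\<bar> * \<bar>N $$ (a,b)\<bar>" by (metis abs_mult abs_triangle_ineq)
    also have "\<dots> \<le> \<bar>M $$ (a,b)\<bar> + \<bar>N $$ (a,b)\<bar>" using that(3) by (simp add: mult_left_le_one_le)
    finally show ?thesis using ent[OF that(1,2)] by simp
  qed
  have XC: "M + u \<cdot>\<^sub>m N \<in> carrier_mat n n" for u using M N by simp
  define f where "f x k = ((M + x \<cdot>\<^sub>m N) ^\<^sub>m k) $$ (i,j) / fact k" for x k
  define f' where "f' x k = (Dm M N x k) $$ (i,j) / fact k" for x k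
  define L where "L k = (2 * B) ^ k * B / fact k" for k
  have derf: "DERIV (\<lambda>x. f x k) x :> f' x k" for x k
    unfolding f_def f'_def by (intro DERIV_cdivide pow_deriv[OF M N ij])
  have fb: "\<bar>f x k\<bar> \<le> B ^ k / fact k" if "\<bar>x\<bar> \<le> 1" for x k
    unfolding f_def B_def using pow_bound[OF XC _ bX, of x i j k] that ij K0
    by (simp add: divide_right_mono)
  have f'b: "\<bar>f' x k\<bar> \<le> L k" if "\<bar>x\<bar> \<le> 1" for x k
  proof -
    have "\<bar>Dm M N x k $$ (i,j)\<bar> \<le> real k * B ^ k * B"
    proof -
      have bXx: "\<And>a b. a < n \<Longrightarrow> b < n \<Longrightarrow> \<bar>(M + x \<cdot>\<^sub>m N) $$ (a,b)\<bar> \<le> K" using bX that by auto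
      show ?thesis unfolding B_def using Dm_bound[OF M N _ nK bXx bN ij, of k] K0 by simp
    qed
    also have "\<dots> \<le> (2 * B) ^ k * B" by (rule k_pow_bound[OF B0 B0])
    finally show ?thesis unfolding f'_def L_def by (simp add: divide_right_mono)
  qed
  have sumL: "summable L"
    unfolding L_def using summable_mult2[OF summable_expB[of "2*B"], of B] by (simp add: mult.commute)
  have sumf: "summable (f x)" if "x \<in> {-1<..<1}" for x
    by (rule summable_comparison_test'[OF summable_expB[of B], of 0]) (use fb that in auto)
  have sumf': "summable (f' 0)"
    by (rule summable_comparison_test'[OF sumL, of 0]) (use f'b in auto)
  have lip: "\<bar>f x k - f y k\<bar> \<le> L k * \<bar>x - y\<bar>" if "x \<in> {-1<..<1}" "y \<in> {-1<..<1}" for k x y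
  proof -
    have gen: "\<bar>f b k - f a k\<bar> \<le> L k * \<bar>b - a\<bar>" if "a < b" "a \<in> {-1<..<1}" "b \<in> {-1<..<1}" for a b
    proof -
      obtain z where z: "a < z" "z < b" "f b k - f a k = (b - a) * f' z k"
        using MVT2[OF \<open>a < b\<close>, of "\<lambda>x. f x k" "\<lambda>x. f' x k"] derf by blast
      have "\<bar>z\<bar> \<le> 1" using z that by auto
      hence "\<bar>f' z k\<bar> \<le> L k" by (rule f'b)
      thus ?thesis using z that by (simp add: abs_mult mult_left_mono mult.commute)
    qed
    consider "x < y" | "x = y" | "y < x" by linarith
    thus ?thesis
    proof cases
      case 1 then show ?thesis using gen[OF 1 that(1,2)] by (simp add: abs_minus_commute)
    next
      case 2 then show ?thesis using sumL by (simp add: L_def B0)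
    next
      case 3 then show ?thesis using gen[OF 3 that(2,1)] by (simp add: abs_minus_commute)
    qed
  qed
  have "DERIV (\<lambda>x. suminf (f x)) 0 :> suminf (f' 0)"
    by (rule DERIV_series'[of f f' 0 "-1" 1 L]) (use derf sumf sumf' sumL lip in auto)
  moreover have "mexp n (M + u \<cdot>\<^sub>m N) $$ (i,j) = suminf (f u)" for u
    unfolding mexp_def f_def using ij M N by simp
  ultimately show ?thesis by auto
qed


lemma mult_emat_entry:
  assumes A: "A \<in> carrier_mat n n" and ab: "a \<noteq> b" "a < n" "b < n" and ij: "i < n" "j < n"
  shows "(A * emat n a b) $$ (i,j) = (if j = b then A $$ (i,a) else 0) - (if j = a then A $$ (i,b) else 0)"
proof -
  have "(A * emat n a b) $$ (i,j) = (\<Sum>l<n. A $$ (i,l) * emat n a b $$ (l,j))"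
    by (rule mult_entry[OF A emat_dim(3) ij])
  also have "\<dots> = (\<Sum>l<n. (if l = a then (if j = b then A $$ (i,l) else 0) else 0) + (if l = b then (if j = a then - A $$ (i,l) else 0) else 0))"
    using ab ij by (intro sum.cong) (auto simp: emat_def)
  also have "\<dots> = (if j = b then A $$ (i,a) else 0) - (if j = a then A $$ (i,b) else 0)"
    using ab by (simp add: sum.distrib)
  finally show ?thesis .
qed

definition Cc :: "nat \<Rightarrow> real" where "Cc k = (if even k then (-1) ^ (k div 2) else 0)"
definition Sc :: "nat \<Rightarrow> real" where "Sc k = (if odd k then (-1) ^ (k div 2) else 0)"

lemma Cc_Suc: "Cc (Suc k) = - Sc k" and Sc_Suc: "Sc (Suc k) = Cc k"
  unfolding Cc_def Sc_def by (auto elim!: oddE evenE)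

lemma emat_pow:
  assumes ab: "a \<noteq> b" "a < n" "b < n"
  shows "i < n \<Longrightarrow> j < n \<Longrightarrow> (emat n a b ^\<^sub>m k) $$ (i,j) =
    (if i = j then (if i = a \<or> i = b then Cc k else (if k = 0 then 1 else 0))
     else if (i,j) = (a,b) then Sc k else if (i,j) = (b,a) then - Sc k else 0)"
proof (induction k arbitrary: i j)
  case 0 then show ?case by (simp add: Cc_def Sc_def)
next
  case (Suc k)
  have "(emat n a b ^\<^sub>m Suc k) $$ (i,j) = (emat n a b ^\<^sub>m k * emat n a b) $$ (i,j)" by simp
  also have "\<dots> = (if j = b then (emat n a b ^\<^sub>m k) $$ (i,a) else 0) - (if j = a then (emat n a b ^\<^sub>m k) $$ (i,b) else 0)"
    by (rule mult_emat_entry[OF pow_carrier_mat[OF emat_dim(3)] ab Suc.prems])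
  finally show ?case using Suc.IH ab Suc.prems by (auto simp: Cc_Suc Sc_Suc)
qed

lemma smult_pow_entry:
  fixes A :: "real mat"
  assumes A: "A \<in> carrier_mat n n"
  shows "i < n \<Longrightarrow> j < n \<Longrightarrow> ((t \<cdot>\<^sub>m A) ^\<^sub>m k) $$ (i,j) = t ^ k * (A ^\<^sub>m k) $$ (i,j)"
proof (induction k arbitrary: i j)
  case 0 then show ?case using A by simp
next
  case (Suc k)
  have tA: "t \<cdot>\<^sub>m A \<in> carrier_mat n n" using A by simp
  have "((t \<cdot>\<^sub>m A) ^\<^sub>m Suc k) $$ (i,j) = (\<Sum>l<n. ((t \<cdot>\<^sub>m A) ^\<^sub>m k) $$ (i,l) * (t \<cdot>\<^sub>m A) $$ (l,j))"
    by (simp only: pow_mat.simps(2)) (rule mult_entry[OF pow_carrier_mat[OF tA] tA Suc.prems])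
  also have "\<dots> = t ^ Suc k * (\<Sum>l<n. (A ^\<^sub>m k) $$ (i,l) * A $$ (l,j))"
    unfolding sum_distrib_left using Suc A by (intro sum.cong refl) (simp, algebra)
  also have "(\<Sum>l<n. (A ^\<^sub>m k) $$ (i,l) * A $$ (l,j)) = (A ^\<^sub>m Suc k) $$ (i,j)"
    by (simp only: pow_mat.simps(2)) (rule mult_entry[OF pow_carrier_mat[OF A] A Suc.prems, symmetric])
  finally show ?case .
qed

lemma mexp_diag_one:
  assumes ab: "a \<noteq> b" "a < n" "b < n" and i: "i < n"
  shows "mexp n (t \<cdot>\<^sub>m emat n a b) $$ (i,i) = (if i = a \<or> i = b then cos t else 1)"
proof -
  have "mexp n (t \<cdot>\<^sub>m emat n a b) $$ (i,i) = (\<Sum>k. ((t \<cdot>\<^sub>m emat n a b) ^\<^sub>m k) $$ (i,i) / fact k)"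
    unfolding mexp_def using i by simp
  also have "\<dots> = (\<Sum>k. t ^ k * (emat n a b ^\<^sub>m k) $$ (i,i) / fact k)"
    using smult_pow_entry[OF emat_dim(3) i i] by simp
  also have "\<dots> = (if i = a \<or> i = b then cos t else 1)"
  proof (cases "i = a \<or> i = b")
    case True
    have "(\<lambda>k. t ^ k * (emat n a b ^\<^sub>m k) $$ (i,i) / fact k) = (\<lambda>k. cos_coeff k * t ^ k)"
      using emat_pow[OF ab i i] True by (auto simp: cos_coeff_def Cc_def)
    then show ?thesis using True cos_converges[of t] by (simp add: sums_iff)
  next
    case False
    have "(\<lambda>k. t ^ k * (emat n a b ^\<^sub>m k) $$ (i,i) / fact k) = (\<lambda>k. if k = 0 then 1 else 0)"
      using emat_pow[OF ab i i] False by auto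
    then show ?thesis using False sums_single[of 0 "\<lambda>_. 1::real"] by (simp add: sums_iff)
  qed
  finally show ?thesis .
qed


lemma conj_pow:
  fixes X Y :: "real mat"
  assumes X: "X \<in> carrier_mat n n" and Y: "Y \<in> carrier_mat n n" and \<sigma>: "\<And>l. \<sigma> l * \<sigma> l = 1"
    and YX: "\<And>i j. i < n \<Longrightarrow> j < n \<Longrightarrow> Y $$ (i,j) = \<sigma> i * \<sigma> j * X $$ (i,j)"
  shows "i < n \<Longrightarrow> j < n \<Longrightarrow> (Y ^\<^sub>m k) $$ (i,j) = \<sigma> i * \<sigma> j * (X ^\<^sub>m k) $$ (i,j)"
proof (induction k arbitrary: i j)
  case 0 then show ?case using X Y \<sigma> by simp
next
  case (Suc k)
  have "(Y ^\<^sub>m Suc k) $$ (i,j) = (\<Sum>l<n. (Y ^\<^sub>m k) $$ (i,l) * Y $$ (l,j))"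
    by (simp only: pow_mat.simps(2)) (rule mult_entry[OF pow_carrier_mat[OF Y] Y Suc.prems])
  also have "\<dots> = (\<Sum>l<n. \<sigma> i * \<sigma> j * ((\<sigma> l * \<sigma> l) * ((X ^\<^sub>m k) $$ (i,l) * X $$ (l,j))))"
    using Suc YX by (intro sum.cong refl) (simp add: mult_ac)
  also have "\<dots> = \<sigma> i * \<sigma> j * (\<Sum>l<n. (X ^\<^sub>m k) $$ (i,l) * X $$ (l,j))"
    by (simp add: \<sigma> sum_distrib_left)
  also have "(\<Sum>l<n. (X ^\<^sub>m k) $$ (i,l) * X $$ (l,j)) = (X ^\<^sub>m Suc k) $$ (i,j)"
    by (simp only: pow_mat.simps(2)) (rule mult_entry[OF pow_carrier_mat[OF X] X Suc.prems, symmetric])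
  finally show ?case .
qed

lemma mexp_conj_diag:
  fixes X Y :: "real mat"
  assumes X: "X \<in> carrier_mat n n" and Y: "Y \<in> carrier_mat n n" and \<sigma>: "\<And>l. \<sigma> l * \<sigma> l = 1"
    and YX: "\<And>i j. i < n \<Longrightarrow> j < n \<Longrightarrow> Y $$ (i,j) = \<sigma> i * \<sigma> j * X $$ (i,j)"
    and i: "i < n"
  shows "mexp n Y $$ (i,i) = mexp n X $$ (i,i)"
  unfolding mexp_def using i conj_pow[OF X Y \<sigma> YX i i] \<sigma> by simp

lemma deriv_even_zero:
  assumes "(\<phi> has_real_derivative D) (at 0)" "\<And>u. \<phi> (- u) = \<phi> u"
  shows "D = 0"
proof -
  have "DERIV (\<lambda>x. \<phi> (- x)) 0 :> - D" using DERIV_mirror[where f=\<phi> and x=0 and y=D] assms(1) by simp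
  hence "DERIV \<phi> 0 :> - D" using assms(2) by simp
  with assms(1) have "D = - D" by (rule DERIV_unique)
  thus ?thesis by simp
qed

lemma partial_eq:
  assumes "((\<lambda>u. h (y(k := y k + u))) has_real_derivative D) (at 0)"
  shows "partial k h y = D"
  unfolding partial_def using assms by (rule some_equality) (rule DERIV_unique[OF _ assms])

definition hf :: "nat \<Rightarrow> (nat \<Rightarrow> real) \<Rightarrow> (nat \<Rightarrow> real) \<Rightarrow> real" where
  "hf n w y = (\<Sum>i<n. w i * mexp n (skew_of n y) $$ (i,i))"

lemma pair_props:
  assumes "p < dimSO n" "coord_pairs n ! p = (a,b)"
  shows "a < b" "b < n"
proof -
  have "(a,b) \<in> set (coord_pairs n)" using assms unfolding dimSO_def by (metis nth_mem)
  thus "a < b" "b < n" by (auto simp: set_coord_pairs)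
qed

lemma hessian_offdiag:
  assumes p: "p < dimSO n" and q: "q < dimSO n" and pq: "p \<noteq> q"
  shows "partial p (partial q (hf n w)) (\<lambda>_. 0) = 0"
proof -
  obtain a b where ab: "coord_pairs n ! p = (a,b)" by fastforce
  obtain c d where cd: "coord_pairs n ! q = (c,d)" by fastforce
  note abp = pair_props[OF p ab] and cdp = pair_props[OF q cd]
  have neq: "(a,b) \<noteq> (c,d)"
    using pq p q ab cd distinct_coord_pairs[of n] unfolding dimSO_def by (metis nth_eq_iff_index_eq)
  define e where "e = (if c \<noteq> a \<and> c \<noteq> b then c else d)"
  have e: "e \<noteq> a" "e \<noteq> b" "e = c \<or> e = d" using neq abp cdp unfolding e_def by auto
  define \<sigma> where "\<sigma> l = (if l = e then -1 else (1::real))" for l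
  have \<sigma>: "\<sigma> l * \<sigma> l = 1" for l unfolding \<sigma>_def by simp
  have inner: "partial q (hf n w) ((\<lambda>_. 0)(p := t)) = 0" for t
  proof -
    define \<phi> where "\<phi> u = hf n w ((\<lambda>_. 0)(p := t, q := u))" for u
    have \<phi>: "\<phi> u = (\<Sum>i<n. w i * mexp n (t \<cdot>\<^sub>m emat n a b + u \<cdot>\<^sub>m emat n c d) $$ (i,i))" for u
      unfolding \<phi>_def hf_def skew_two[OF p ab q cd pq] ..
    have "\<forall>i\<in>{..<n}. \<exists>D. ((\<lambda>u. mexp n (t \<cdot>\<^sub>m emat n a b + u \<cdot>\<^sub>m emat n c d) $$ (i,i)) has_real_derivative D) (at 0)"
      by (auto intro!: mexp_line_deriv)
    then obtain Df where Df: "\<And>i. i \<in> {..<n} \<Longrightarrow> ((\<lambda>u. mexp n (t \<cdot>\<^sub>m emat n a b + u \<cdot>\<^sub>m emat n c d) $$ (i,i)) has_real_derivative Df i) (at 0)"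
      by metis
    have der: "(\<phi> has_real_derivative (\<Sum>i<n. w i * Df i)) (at 0)"
      unfolding \<phi> by (intro DERIV_sum DERIV_cmult Df)
    have even: "\<phi> (- u) = \<phi> u" for u
      unfolding \<phi>
    proof (intro sum.cong refl arg_cong[where f = "\<lambda>x. w _ * x"])
      fix i assume "i \<in> {..<n}"
      hence i: "i < n" by simp
      show "mexp n (t \<cdot>\<^sub>m emat n a b + (- u) \<cdot>\<^sub>m emat n c d) $$ (i,i) = mexp n (t \<cdot>\<^sub>m emat n a b + u \<cdot>\<^sub>m emat n c d) $$ (i,i)"
      proof (rule mexp_conj_diag[OF _ _ \<sigma> _ i])
        fix i j assume "i < n" "j < n"
        thus "(t \<cdot>\<^sub>m emat n a b + (- u) \<cdot>\<^sub>m emat n c d) $$ (i,j) = \<sigma> i * \<sigma> j * (t \<cdot>\<^sub>m emat n a b + u \<cdot>\<^sub>m emat n c d) $$ (i,j)"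
          using e abp cdp unfolding \<sigma>_def by (auto simp: emat_def)
      qed auto
    qed
    have "(\<Sum>i<n. w i * Df i) = 0" by (rule deriv_even_zero[OF der even])
    moreover have "((\<lambda>u. hf n w (((\<lambda>_. 0)(p := t)) (q := ((\<lambda>_. 0)(p := t)) q + u))) has_real_derivative (\<Sum>i<n. w i * Df i)) (at 0)"
      using der pq unfolding \<phi>_def by simp
    ultimately show ?thesis by (intro partial_eq) simp
  qed
  have "((\<lambda>u. partial q (hf n w) ((\<lambda>_. 0) (p := (\<lambda>_. 0) p + u))) has_real_derivative 0) (at 0)"
    using inner by simp
  thus ?thesis by (rule partial_eq)
qed

lemma hessian_diag:
  assumes p: "p < dimSO n" and ab: "coord_pairs n ! p = (a,b)"
  shows "partial p (partial p (hf n w)) (\<lambda>_. 0) = - (w a + w b)"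
proof -
  note abp = pair_props[OF p ab]
  have ab': "a \<noteq> b" "a < n" "b < n" using abp by auto
  define W where "W = w a + w b"
  define S where "S = (\<Sum>i<n. w i)"
  have g: "hf n w ((\<lambda>_. 0)(p := t)) = S + W * (cos t - 1)" for t
  proof -
    have "hf n w ((\<lambda>_. 0)(p := t)) = (\<Sum>i<n. w i * (if i = a \<or> i = b then cos t else 1))"
      unfolding hf_def skew_one[OF p ab] using mexp_diag_one[OF ab'] by (intro sum.cong refl) simp
    also have "\<dots> = (\<Sum>i<n. w i + ((if i = a then w i * (cos t - 1) else 0) + (if i = b then w i * (cos t - 1) else 0)))"
      using ab' by (intro sum.cong refl) (auto simp: algebra_simps)
    also have "\<dots> = S + W * (cos t - 1)"
      unfolding S_def W_def using ab' by (simp add: sum.distrib algebra_simps)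
    finally show ?thesis .
  qed
  have inner: "partial p (hf n w) ((\<lambda>_. 0)(p := t)) = - W * sin t" for t
  proof (rule partial_eq)
    have "((\<lambda>u. S + W * (cos (t + u) - 1)) has_real_derivative - W * sin t) (at 0)"
      by (auto intro!: derivative_eq_intros)
    thus "((\<lambda>u. hf n w (((\<lambda>_. 0)(p := t)) (p := ((\<lambda>_. 0)(p := t)) p + u))) has_real_derivative - W * sin t) (at 0)"
      by (simp add: g)
  qed
  have "((\<lambda>u. partial p (hf n w) ((\<lambda>_. 0) (p := (\<lambda>_. 0) p + u))) has_real_derivative - W) (at 0)"
  proof -
    have "((\<lambda>u. - W * sin u) has_real_derivative - W * cos 0) (at 0)"
      by (auto intro!: derivative_eq_intros)
    thus ?thesis by (simp add: inner)
  qed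
  hence "partial p (partial p (hf n w)) (\<lambda>_. 0) = - W" by (rule partial_eq)
  thus ?thesis unfolding W_def .
qed


lemma order_linprod: "order a (\<Prod>x\<leftarrow>xs. [:-x, 1:]) = count_list xs (a::real)"
proof (induction xs)
  case Nil
  show ?case by (simp add: order_0I)
next
  case (Cons x xs)
  have nz: "(\<Prod>x\<leftarrow>xs. [:-x, 1:]) \<noteq> (0::real poly)"
    by (auto simp: prod_list_zero_iff)
  have "order a (\<Prod>x\<leftarrow>x # xs. [:-x, 1:]) = order a [:-x,1:] + order a (\<Prod>x\<leftarrow>xs. [:-x, 1:])"
    unfolding list.map prod_list.Cons by (rule order_mult) (rule no_zero_divisors, simp, rule nz)
  also have "order a [:-x,1:] = (if x = a then 1 else 0)"
    using order_power_n_n[of a 1] by (auto intro!: order_0I)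
  finally show ?case using Cons by simp
qed

lemma count_list_filter: "P a \<Longrightarrow> count_list (filter P xs) a = count_list xs a"
  by (induction xs) auto

lemma num_neg_list:
  assumes "char_poly M = (\<Prod>x\<leftarrow>xs. [:-x, 1:])"
  shows "num_neg_eigenvalues M = length (filter (\<lambda>x. x < 0) xs)"
proof -
  have roots: "{a. a < 0 \<and> poly (char_poly M) a = 0} = {a \<in> set xs. a < 0}"
    unfolding assms poly_prod_list by (auto simp: prod_list_zero_iff)
  have "num_neg_eigenvalues M = (\<Sum>a\<in>{a \<in> set xs. a < 0}. count_list xs a)"
    unfolding num_neg_eigenvalues_def roots unfolding assms order_linprod ..
  also have "\<dots> = (\<Sum>a\<in>{a \<in> set xs. a < 0}. count_list (filter (\<lambda>x. x < 0) xs) a)"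
    by (intro sum.cong refl) (simp add: count_list_filter)
  also have "\<dots> = length (filter (\<lambda>x. x < 0) xs)"
    by (rule sum_count_set) auto
  finally show ?thesis .
qed

lemma count_coord_pairs:
  "length (filter P (coord_pairs m)) = (\<Sum>j<m. length (filter (\<lambda>i. P (i,j)) [0..<j]))"
proof (induction m)
  case 0 then show ?case by (simp add: coord_pairs_def)
next
  case (Suc m)
  have e: "coord_pairs (Suc m) = coord_pairs m @ map (\<lambda>i. (i,m)) [0..<m]"
    by (simp add: coord_pairs_def)
  show ?case unfolding e using Suc by (simp add: o_def)
qed

theorem mainTheorem3:
  fixes n :: nat and c :: "nat \<Rightarrow> real" and \<epsilon> :: "nat \<Rightarrow> real" and A :: "real mat"
  assumes "n \<ge> 2"
    and "0 \<le> c 0"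
    and "\<And>i j. i < j \<Longrightarrow> j < n \<Longrightarrow> c i < c j"
    and "\<And>i. i < n \<Longrightarrow> \<epsilon> i = 1 \<or> \<epsilon> i = -1"
    and "A = mat n n (\<lambda>(i,j). if i = j then \<epsilon> i else 0)"
    and "A \<in> SO n"
  shows "morse_index n c A = (\<Sum>i\<in>{i. i < n \<and> \<epsilon> i = 1}. i)
    \<and> fC n c A = 2 * (\<Sum>i\<in>{i. i < n \<and> \<epsilon> i = 1}. c i) - (\<Sum>i<n. c i)"
proof
  note c0 = assms(2) and cmono = assms(3) and eps = assms(4) and Adef = assms(5)
  define w where "w i = c i * \<epsilon> i" for i
  define N where "N = dimSO n"
  have Acar: "A \<in> carrier_mat n n" using Adef by simp
  have cnn: "c i \<ge> 0" if "i < n" for i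
    using c0 cmono[of 0 i] that by (cases "i = 0") auto
  have hA: "(\<lambda>x. fC n c (chart n A x)) = hf n w"
  proof
    fix x
    define E where "E = mexp n (skew_of n x)"
    have Ecar: "E \<in> carrier_mat n n" unfolding E_def mexp_def by simp
    have "(A * E) $$ (i,i) = \<epsilon> i * E $$ (i,i)" if i: "i < n" for i
    proof -
      have "(A * E) $$ (i,i) = (\<Sum>l<n. A $$ (i,l) * E $$ (l,i))" by (rule mult_entry[OF Acar Ecar i i])
      also have "\<dots> = (\<Sum>l<n. if l = i then \<epsilon> i * E $$ (l,i) else 0)"
        using i Adef by (intro sum.cong refl) auto
      finally show ?thesis using i by simp
    qed
    thus "fC n c (chart n A x) = hf n w x"
      unfolding fC_def chart_def hf_def w_def E_def[symmetric] by (intro sum.cong refl) auto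
  qed
  define lam where "lam p = - (w (fst (coord_pairs n ! p)) + w (snd (coord_pairs n ! p)))" for p
  define H where "H = hessian N (hf n w) (\<lambda>_. 0)"
  have H: "H = mat N N (\<lambda>(p,q). if p = q then lam p else 0)"
  proof (rule eq_matI)
    fix p q assume "p < dim_row (mat N N (\<lambda>(p,q). if p = q then lam p else 0))"
        "q < dim_col (mat N N (\<lambda>(p,q). if p = q then lam p else 0))"
    hence pq: "p < N" "q < N" by auto
    show "H $$ (p,q) = mat N N (\<lambda>(p,q). if p = q then lam p else 0) $$ (p,q)"
    proof (cases "p = q")
      case True
      then show ?thesis unfolding H_def hessian_def lam_def using pq hessian_diag[of p n "fst (coord_pairs n ! p)" "snd (coord_pairs n ! p)" w]
        by (simp add: N_def)
    next
      case False
      then show ?thesis unfolding H_def hessian_def using pq hessian_offdiag[of p n q w]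
        by (simp add: N_def)
    qed
  qed (auto simp: H_def hessian_def)
  have Hcar: "H \<in> carrier_mat N N" unfolding H by simp
  have ut: "upper_triangular H" unfolding H upper_triangular_def by auto
  have diag: "diag_mat H = map lam [0..<N]" unfolding H diag_mat_def by simp
  have cp: "char_poly H = (\<Prod>x\<leftarrow>map lam [0..<N]. [:-x, 1:])"
    using char_poly_upper_triangular[OF Hcar ut] unfolding diag .
  have mi: "morse_index n c A = length (filter (\<lambda>x. x < 0) (map lam [0..<N]))"
    unfolding morse_index_def hA H_def[symmetric] N_def[symmetric] by (rule num_neg_list[OF cp])
  have "map lam [0..<N] = map (\<lambda>(a,b). - (w a + w b)) (coord_pairs n)"
  proof -
    have "map lam [0..<N] = map (\<lambda>(a,b). - (w a + w b)) (map (\<lambda>p. coord_pairs n ! p) [0..<length (coord_pairs n)])"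
      unfolding lam_def N_def dimSO_def by (simp add: case_prod_beta)
    also have "map (\<lambda>p. coord_pairs n ! p) [0..<length (coord_pairs n)] = coord_pairs n"
      by (rule map_nth)
    finally show ?thesis .
  qed
  hence "length (filter (\<lambda>x. x < 0) (map lam [0..<N])) = length (filter ((\<lambda>x. x < 0) \<circ> (\<lambda>(a,b). - (w a + w b))) (coord_pairs n))"
    by (simp only: filter_map length_map)
  also have "\<dots> = length (filter (\<lambda>(a,b). w a + w b > 0) (coord_pairs n))"
    by (intro arg_cong[where f=length] filter_cong) auto
  also have "\<dots> = (\<Sum>j<n. length (filter (\<lambda>i. w i + w j > 0) [0..<j]))"
    by (simp add: count_coord_pairs)
  also have "\<dots> = (\<Sum>j<n. if \<epsilon> j = 1 then j else 0)"
  proof (intro sum.cong refl)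
    fix j assume "j \<in> {..<n}"
    hence j: "j < n" by simp
    have sgn: "w i + w j > 0 \<longleftrightarrow> \<epsilon> j = 1" if "i < j" for i
    proof -
      have ci: "0 \<le> c i" "c i < c j" using cnn[of i] cmono[OF that j] that j by auto
      have "\<bar>w i\<bar> = c i" using eps[of i] ci that j unfolding w_def by auto
      thus ?thesis using eps[OF j] ci unfolding w_def by auto
    qed
    show "length (filter (\<lambda>i. w i + w j > 0) [0..<j]) = (if \<epsilon> j = 1 then j else 0)"
    proof (cases "\<epsilon> j = 1")
      case True
      hence "filter (\<lambda>i. w i + w j > 0) [0..<j] = [0..<j]" using sgn by (intro filter_True) auto
      thus ?thesis using True by simp
    next
      case False
      hence "filter (\<lambda>i. w i + w j > 0) [0..<j] = []" using sgn by (intro filter_False) auto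
      thus ?thesis using False by simp
    qed
  qed
  also have "\<dots> = (\<Sum>i\<in>{i. i < n \<and> \<epsilon> i = 1}. i)"
  proof -
    have "{i. i < n \<and> \<epsilon> i = 1} = {i \<in> {..<n}. \<epsilon> i = 1}" by auto
    moreover have "(\<Sum>i\<in>{i \<in> {..<n}. \<epsilon> i = 1}. i) = (\<Sum>j<n. if \<epsilon> j = 1 then j else 0)"
      by (rule sum.inter_filter) simp
    ultimately show ?thesis by simp
  qed
  finally show "morse_index n c A = (\<Sum>i\<in>{i. i < n \<and> \<epsilon> i = 1}. i)" using mi by simp
next
  note eps = assms(4) and Adef = assms(5)
  define S1 where "S1 = {i \<in> {..<n}. \<epsilon> i = 1}"
  define S2 where "S2 = {i \<in> {..<n}. \<epsilon> i \<noteq> 1}"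
  have "fC n c A = (\<Sum>i<n. if \<epsilon> i = 1 then c i else - c i)"
    unfolding fC_def using Adef eps by (intro sum.cong refl) (auto, metis mult_minus1_right)
  also have "\<dots> = (\<Sum>i\<in>S1. c i) + (\<Sum>i\<in>S2. - c i)"
    unfolding S1_def S2_def by (simp add: sum.If_cases Int_def)
  also have "(\<Sum>i\<in>S2. - c i) = - (\<Sum>i\<in>S2. c i)" by (rule sum_negf)
  finally have f1: "fC n c A = (\<Sum>i\<in>S1. c i) - (\<Sum>i\<in>S2. c i)" by simp
  have "(\<Sum>i<n. c i) = sum c (S1 \<union> S2)"
    unfolding S1_def S2_def by (intro arg_cong[where f="sum c"]) auto
  also have "\<dots> = (\<Sum>i\<in>S1. c i) + (\<Sum>i\<in>S2. c i)"
    unfolding S1_def S2_def by (rule sum.union_disjoint) auto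
  finally have f2: "(\<Sum>i<n. c i) = (\<Sum>i\<in>S1. c i) + (\<Sum>i\<in>S2. c i)" .
  have f3: "{i. i < n \<and> \<epsilon> i = 1} = S1" unfolding S1_def by auto
  show "fC n c A = 2 * (\<Sum>i\<in>{i. i < n \<and> \<epsilon> i = 1}. c i) - (\<Sum>i<n. c i)"
    unfolding f3 f1 f2 by simp
qed

end
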